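(* For every $n\in\mathbb{N}$, all nonempty chains $c_k,c_s$ over $[n]$, and all formulas $\varphi,\psi$: letting $c_r$ be the chain of symbols common to $c_k$ and $c_s$, $$\vdash_{(n)}\neg_{c_k}\varphi\to_{(n)}\big(\neg_{c_s}\psi\to_{(n)}\neg_{c_s\otimes c_r}(\varphi\to_{(n)}\psi)\big).$$
   Context: Fix $n\in\mathbb{N}$, $n\ge 1$, and write $[n]=\{1,\dots,n\}$. Chains: a chain over $[n]$ is a finite sequence of distinct elements of $[n]$; chains with the same length and the same symbols are identified, so a chain is effectively a subset of $[n]$. $c_k$ denotes a chain with $k$ symbols, $\epsilon$ the empty chain, and $(n)$ the chain consisting of all symbols of $[n]$. For chains $c,d$: the concatenation $c\cdot d$ is the chain of symbols occurring in $c$ or in $d$; the coconcatenation $c\otimes d$ is the chain of symbols occurring in exactly one of $c,d$; $d$ is a subchain of $c$ if every symbol of $d$ is a symbol of $c$. The complementary chain $c'_{n-k}$ of $c_k$ is the chain of the symbols of $[n]$ not occurring in $c_k$. Language of $\mathbf{CPN}_n$: a countable set $P_n$ of propositional letters; constants $\perp_c$ for each chain $c$ over $[n]$ with $1\le |c|\le n-1$, and constants $\perp_{(n)}$ (contradiction) and $\top_{(n)}$ (truth); a unary connective $\neg_c$ for each nonempty chain $c$ over $[n]$ ($\neg_{(n)}$ is the strong negation; the $\neg_c$ with $|c|\le n-1$ are weak negations); a binary connective $\to_{(n)}$. Formulas: propositional letters and constants are formulas; if $\varphi,\psi$ are formulas then so are $\neg_c\varphi$ and $(\varphi\to_{(n)}\psi)$.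 Conventions: $\neg_\epsilon\varphi:=\varphi$, $\perp_\epsilon:=\top_{(n)}$, and $\perp_c$ for $c=(n)$ means $\perp_{(n)}$. Abbreviations: $\varphi\wedge_{(n)}\psi:=\neg_{(n)}(\varphi\to_{(n)}\neg_{(n)}\psi)$, $\varphi\vee_{(n)}\psi:=\neg_{(n)}\varphi\to_{(n)}\psi$, $\varphi\leftrightarrow_{(n)}\psi:=(\varphi\to_{(n)}\psi)\wedge_{(n)}(\psi\to_{(n)}\varphi)$. Axioms of $\mathbf{CPN}_n$, for all formulas $\varphi,\psi,\chi$ and all nonempty chains $c_k,c_r$ over $[n]$: (A1) $\varphi\to_{(n)}(\psi\to_{(n)}\varphi)$; (A2) $(\varphi\to_{(n)}(\psi\to_{(n)}\chi))\to_{(n)}((\varphi\to_{(n)}\psi)\to_{(n)}(\varphi\to_{(n)}\chi))$; (A3) $(\neg_{(n)}\psi\to_{(n)}\neg_{(n)}\varphi)\to_{(n)}((\neg_{(n)}\psi\to_{(n)}\varphi)\to_{(n)}\psi)$; (A4) $\varphi\to_{(n)}(\perp_{c_k}\to_{(n)}\neg_{c_k}\varphi)$; (A5) $\neg_{c_k}\neg_{c_r}\varphi\leftrightarrow_{(n)}\neg_{c_k\otimes c_r}\varphi$; (A6) $\neg_{c_k}\perp_{c_r}\leftrightarrow_{(n)}\perp_{c_k\otimes c_r}$; (A7) $\perp_{c_k}\to_{(n)}\perp_{c_r}$, whenever $c_r$ is a subchain of $c_k$. The only rule of inference is modus ponens (from $\varphi$ and $\varphi\to_{(n)}\psi$ infer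 $\psi$). For a set $\Sigma$ of formulas, $\Sigma\vdash_{(n)}\varphi$ means there is a finite sequence of formulas ending with $\varphi$, each of which is an axiom, a member of $\Sigma$, or obtained from two earlier members by modus ponens; $\vdash_{(n)}\varphi$ means $\emptyset\vdash_{(n)}\varphi$. *)

theory Defs
  imports Main
begin

text \<open>Chains over [n] are identified with subsets of {1..n}.
  Formulas of CPN_n: propositional letters (indexed by nat), constants
  Falsum c (for a nonempty chain c; Falsum {1..n} is the contradiction),
  Top (truth), weak/strong negations Neg c (c nonempty), implication.\<close>

datatype form =
    PVar nat
  | Falsum "nat set"
  | Top
  | Neg "nat set" form
  | Imp form form

definition chain :: "nat \<Rightarrow> nat set \<Rightarrow> bool" where
  "chain n c \<longleftrightarrow> c \<subseteq> {1..n}"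

definition full :: "nat \<Rightarrow> nat set" where
  "full n = {1..n}"

definition cocat :: "nat set \<Rightarrow> nat set \<Rightarrow> nat set" where
  "cocat c d = (c - d) \<union> (d - c)"

fun wf :: "nat \<Rightarrow> form \<Rightarrow> bool" where
  "wf n (PVar p) = True"
| "wf n (Falsum c) = (chain n c \<and> c \<noteq> {})"
| "wf n Top = True"
| "wf n (Neg c \<phi>) = (chain n c \<and> c \<noteq> {} \<and> wf n \<phi>)"
| "wf n (Imp \<phi> \<psi>) = (wf n \<phi> \<and> wf n \<psi>)"

definition neg :: "nat set \<Rightarrow> form \<Rightarrow> form" where
  "neg c \<phi> = (if c = {} then \<phi> else Neg c \<phi>)"

definition bot :: "nat set \<Rightarrow> form" where
  "bot c = (if c = {} then Top else Falsum c)"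

definition conj :: "nat \<Rightarrow> form \<Rightarrow> form \<Rightarrow> form" where
  "conj n \<phi> \<psi> = Neg (full n) (Imp \<phi> (Neg (full n) \<psi>))"

definition disj :: "nat \<Rightarrow> form \<Rightarrow> form \<Rightarrow> form" where
  "disj n \<phi> \<psi> = Imp (Neg (full n) \<phi>) \<psi>"

definition iff :: "nat \<Rightarrow> form \<Rightarrow> form \<Rightarrow> form" where
  "iff n \<phi> \<psi> = conj n (Imp \<phi> \<psi>) (Imp \<psi> \<phi>)"

inductive axiom :: "nat \<Rightarrow> form \<Rightarrow> bool" for n :: nat where
  A1: "\<lbrakk>wf n \<phi>; wf n \<psi>\<rbrakk> \<Longrightarrow> axiom n (Imp \<phi> (Imp \<psi> \<phi>))"
| A2: "\<lbrakk>wf n \<phi>; wf n \<psi>; wf n \<chi>\<rbrakk> \<Longrightarrow>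
     axiom n (Imp (Imp \<phi> (Imp \<psi> \<chi>)) (Imp (Imp \<phi> \<psi>) (Imp \<phi> \<chi>)))"
| A3: "\<lbrakk>wf n \<phi>; wf n \<psi>\<rbrakk> \<Longrightarrow>
     axiom n (Imp (Imp (Neg (full n) \<psi>) (Neg (full n) \<phi>))
                 (Imp (Imp (Neg (full n) \<psi>) \<phi>) \<psi>))"
| A4: "\<lbrakk>wf n \<phi>; chain n ck; ck \<noteq> {}\<rbrakk> \<Longrightarrow>
     axiom n (Imp \<phi> (Imp (Falsum ck) (Neg ck \<phi>)))"
| A5: "\<lbrakk>wf n \<phi>; chain n ck; ck \<noteq> {}; chain n cr; cr \<noteq> {}\<rbrakk> \<Longrightarrow>
     axiom n (iff n (Neg ck (Neg cr \<phi>)) (neg (cocat ck cr) \<phi>))"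
| A6: "\<lbrakk>chain n ck; ck \<noteq> {}; chain n cr; cr \<noteq> {}\<rbrakk> \<Longrightarrow>
     axiom n (iff n (Neg ck (Falsum cr)) (bot (cocat ck cr)))"
| A7: "\<lbrakk>chain n ck; ck \<noteq> {}; cr \<noteq> {}; cr \<subseteq> ck\<rbrakk> \<Longrightarrow>
     axiom n (Imp (Falsum ck) (Falsum cr))"

inductive deriv :: "nat \<Rightarrow> form set \<Rightarrow> form \<Rightarrow> bool" for n :: nat where
  Ax: "axiom n \<phi> \<Longrightarrow> deriv n \<Sigma> \<phi>"
| Hyp: "\<phi> \<in> \<Sigma> \<Longrightarrow> deriv n \<Sigma> \<phi>"
| MP: "\<lbrakk>deriv n \<Sigma> \<phi>; deriv n \<Sigma> (Imp \<phi> \<psi>)\<rbrakk> \<Longrightarrow> deriv n \<Sigma> \<psi>"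

end

theory Submission
  imports Defs
begin

abbreviation NN :: "nat \<Rightarrow> form \<Rightarrow> form" where "NN n \<phi> \<equiv> Neg (full n) \<phi>"

lemma wf_full: "n \<ge> 1 \<Longrightarrow> chain n (full n) \<and> full n \<noteq> {}"
  by (auto simp: chain_def full_def)

lemma axiom_wf0: "axiom n \<phi> \<Longrightarrow> n \<ge> 1 \<Longrightarrow> wf n \<phi>"
  by (induct rule: axiom.induct)
     (auto simp: iff_def conj_def neg_def bot_def full_def chain_def cocat_def)

lemma axiom_wf: "n \<ge> 1 \<Longrightarrow> axiom n \<phi> \<Longrightarrow> wf n \<phi>" using axiom_wf0 by blast

lemma deriv_wf: "deriv n \<Sigma> \<phi> \<Longrightarrow> n \<ge> 1 \<Longrightarrow> \<forall>\<psi>\<in>\<Sigma>. wf n \<psi> \<Longrightarrow> wf n \<phi>"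
  by (induct rule: deriv.induct) (auto simp: axiom_wf)

lemma deriv_mono: "deriv n \<Sigma> \<phi> \<Longrightarrow> \<Sigma> \<subseteq> \<Gamma> \<Longrightarrow> deriv n \<Gamma> \<phi>"
  by (induct rule: deriv.induct) (auto intro: deriv.intros)

lemma mp: "deriv n \<Sigma> (Imp A B) \<Longrightarrow> deriv n \<Sigma> A \<Longrightarrow> deriv n \<Sigma> B"
  by (rule deriv.MP)

lemma ax1: "wf n A \<Longrightarrow> wf n B \<Longrightarrow> deriv n \<Sigma> (Imp A (Imp B A))"
  by (rule deriv.Ax, rule axiom.A1)

lemma ax2: "wf n A \<Longrightarrow> wf n B \<Longrightarrow> wf n C \<Longrightarrow>
  deriv n \<Sigma> (Imp (Imp A (Imp B C)) (Imp (Imp A B) (Imp A C)))"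
  by (rule deriv.Ax, rule axiom.A2)

lemma ax3: "wf n A \<Longrightarrow> wf n B \<Longrightarrow>
  deriv n \<Sigma> (Imp (Imp (NN n B) (NN n A)) (Imp (Imp (NN n B) A) B))"
  by (rule deriv.Ax, rule axiom.A3)

lemma imp_self: "wf n A \<Longrightarrow> deriv n \<Sigma> (Imp A A)"
  by (meson ax1 ax2 mp wf.simps(5))

lemma DT0: "deriv n \<Gamma> B \<Longrightarrow> \<Gamma> = insert A \<Sigma> \<Longrightarrow> n \<ge> 1 \<Longrightarrow> \<forall>\<psi>\<in>\<Sigma>. wf n \<psi> \<Longrightarrow> wf n A
   \<Longrightarrow> deriv n \<Sigma> (Imp A B)"
proof (induct rule: deriv.induct)
  case (Ax \<phi> \<Gamma>)
  then show ?case by (meson ax1 axiom_wf deriv.Ax mp)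
next
  case (Hyp \<phi> \<Gamma>)
  then show ?case using imp_self ax1 deriv.Hyp mp by (metis insert_iff)
next
  case (MP \<Gamma> \<phi> \<psi>)
  have w: "\<forall>\<psi>\<in>\<Gamma>. wf n \<psi>" using MP by auto
  have "wf n \<phi>" using deriv_wf[OF MP(1)] MP w by auto
  moreover have "wf n \<psi>" using deriv_wf[OF MP(3)] MP w by auto
  ultimately show ?case using MP ax2 mp by metis
qed

lemma DT: "deriv n (insert A \<Sigma>) B \<Longrightarrow> n \<ge> 1 \<Longrightarrow> \<forall>\<psi>\<in>\<Sigma>. wf n \<psi> \<Longrightarrow> wf n A
   \<Longrightarrow> deriv n \<Sigma> (Imp A B)"
  using DT0 by blast

lemma hyp1: "deriv n (insert A \<Sigma>) A" by (rule deriv.Hyp) simp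

lemma hyp2: "deriv n (insert B (insert A \<Sigma>)) A" by (rule deriv.Hyp) simp
lemma hyp3: "deriv n (insert C (insert B (insert A \<Sigma>))) A" by (rule deriv.Hyp) simp

lemma lift: "deriv n {} X \<Longrightarrow> deriv n \<Sigma> X" using deriv_mono by blast

datatype pf = At form | PI pf pf | PN pf

fun tr :: "nat \<Rightarrow> pf \<Rightarrow> form" where
  "tr n (At f) = f" | "tr n (PI a b) = Imp (tr n a) (tr n b)" | "tr n (PN a) = Neg (full n) (tr n a)"

fun ev :: "(form \<Rightarrow> bool) \<Rightarrow> pf \<Rightarrow> bool" where
  "ev v (At f) = v f" | "ev v (PI a b) = (ev v a \<longrightarrow> ev v b)" | "ev v (PN a) = (\<not> ev v a)"

fun ats :: "pf \<Rightarrow> form set" where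
  "ats (At f) = {f}" | "ats (PI a b) = ats a \<union> ats b" | "ats (PN a) = ats a"

lemma finite_ats: "finite (ats P)" by (induct P) auto

definition lit :: "nat \<Rightarrow> (form \<Rightarrow> bool) \<Rightarrow> form \<Rightarrow> form" where
  "lit n v f = (if v f then f else Neg (full n) f)"

definition plit :: "nat \<Rightarrow> (form \<Rightarrow> bool) \<Rightarrow> pf \<Rightarrow> form" where
  "plit n v P = (if ev v P then tr n P else Neg (full n) (tr n P))"

definition piff :: "pf \<Rightarrow> pf \<Rightarrow> pf" where
  "piff a b = PN (PI (PI a b) (PN (PI b a)))"

lemma tr_piff: "tr n (piff a b) = iff n (tr n a) (tr n b)"
  by (simp add: piff_def iff_def conj_def)

lemma ev_piff: "ev v (piff a b) = (ev v a = ev v b)" by (auto simp: piff_def)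

lemma ats_piff: "ats (piff a b) = ats a \<union> ats b" by (auto simp: piff_def)

lemma fold_mp: "deriv n {} (tr n (foldr PI Hs G)) \<Longrightarrow> \<forall>H\<in>set Hs. deriv n {} (tr n H) \<Longrightarrow> deriv n {} (tr n G)"
  by (induct Hs) (auto intro: mp)

context fixes n :: nat assumes n1: "n \<ge> 1" begin
lemma fn[simp]: "chain n (full n)" "full n \<noteq> {}" "Suc 0 \<le> n" "1 \<le> n"
  using wf_full n1 by auto
lemma wfN: "n \<ge> 1 \<Longrightarrow> wf n (NN n X) = wf n X" using wf_full by simp

lemma dne: assumes n: "n \<ge> 1" and w: "wf n B" shows "deriv n \<Sigma> (Imp (NN n (NN n B)) B)"
proof -
  have wN: "wf n (NN n B)" "wf n (NN n (NN n B))" using n w wfN by auto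
  have 1: "deriv n {NN n (NN n B)} (Imp (NN n B) (NN n (NN n B)))"
    by (rule mp[OF ax1 hyp1]) (auto simp: n w wf_full wN)
  have 2: "deriv n {NN n (NN n B)} (Imp (NN n B) (NN n B))" by (rule imp_self) (simp add: wN n w wf_full)
  have "deriv n {NN n (NN n B)} B"
    by (rule mp[OF mp[OF ax3[of n "NN n B" B] 1] 2]) (auto simp: n w wf_full wN w)
  then show ?thesis using DT[of n _ "{}"] n w wN lift by simp
qed

lemma dni: assumes n: "n \<ge> 1" and w: "wf n B" shows "deriv n \<Sigma> (Imp B (NN n (NN n B)))"
proof -
  have wN: "wf n (NN n B)" "wf n (NN n (NN n B))" "wf n (NN n (NN n (NN n B)))" using n w wfN by auto
  have 1: "deriv n {B} (Imp (NN n (NN n (NN n B))) (NN n B))" by (rule dne) (auto simp: n w wfN)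
  have 2: "deriv n {B} (Imp (NN n (NN n (NN n B))) B)" by (rule mp[OF ax1 hyp1]) (auto simp: n w wf_full wN w)
  have "deriv n {B} (NN n (NN n B))"
    by (rule mp[OF mp[OF ax3[of n B "NN n (NN n B)"] 1] 2]) (auto simp: n w wf_full wN w)
  then show ?thesis using DT[of n _ "{}"] n w wN lift by simp
qed

lemma efq: assumes n: "n \<ge> 1" and w: "wf n A" "wf n B" shows "deriv n \<Sigma> (Imp (NN n A) (Imp A B))"
proof -
  have wN: "wf n (NN n A)" "wf n (NN n B)" using n w wfN by auto
  have 1: "deriv n {A, NN n A} (Imp (NN n B) (NN n A))" by (rule mp[OF ax1 hyp2]) (auto simp: n w wf_full wN w)
  have 2: "deriv n {A, NN n A} (Imp (NN n B) A)" by (rule mp[OF ax1 hyp1]) (auto simp: n w wf_full wN w)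
  have "deriv n {A, NN n A} B"
    by (rule mp[OF mp[OF ax3[of n A B] 1] 2]) (auto simp: n w wf_full w)
  then have "deriv n {NN n A} (Imp A B)" using DT n w wN by simp
  then show ?thesis using DT[of n _ "{}"] n w wN lift by simp
qed

lemma contra: assumes n: "n \<ge> 1" and w: "wf n A" "wf n B"
  shows "deriv n \<Sigma> (Imp (Imp A B) (Imp (NN n B) (NN n A)))"
proof -
  have wN: "wf n (NN n A)" "wf n (NN n B)" "wf n (NN n (NN n A))" using n w wfN by auto
  have 0: "deriv n {NN n (NN n A), NN n B, Imp A B} A" by (rule mp[OF dne hyp1]) (auto simp: n w wf_full)
  have "deriv n {NN n (NN n A), NN n B, Imp A B} B"
    by (rule mp[OF hyp3 0])
  then have 2: "deriv n {NN n B, Imp A B} (Imp (NN n (NN n A)) B)" using DT n w wN by simp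
  have 1: "deriv n {NN n B, Imp A B} (Imp (NN n (NN n A)) (NN n B))"
    by (rule mp[OF ax1 hyp1]) (auto simp: n w wf_full wN w)
  have "deriv n {NN n B, Imp A B} (NN n A)"
    by (rule mp[OF mp[OF ax3[of n B "NN n A"] 1] 2]) (auto simp: n w wf_full wN w)
  then have "deriv n {Imp A B} (Imp (NN n B) (NN n A))" using DT n w wN by simp
  then show ?thesis using DT[of n _ "{}"] n w wN lift by simp
qed

lemma impneg: assumes n: "n \<ge> 1" and w: "wf n A" "wf n B"
  shows "deriv n \<Sigma> (Imp A (Imp (NN n B) (NN n (Imp A B))))"
proof -
  have wN: "wf n (NN n A)" "wf n (NN n B)" "wf n (NN n (NN n (Imp A B)))" "wf n (NN n (Imp A B))"
    using n w wfN by auto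
  have 0: "deriv n {NN n (NN n (Imp A B)), NN n B, A} (Imp A B)"
    by (rule mp[OF dne hyp1]) (auto simp: n w wf_full)
  have "deriv n {NN n (NN n (Imp A B)), NN n B, A} B"
    by (rule mp[OF 0 hyp3])
  then have 2: "deriv n {NN n B, A} (Imp (NN n (NN n (Imp A B))) B)" using DT n w wN by simp
  have 1: "deriv n {NN n B, A} (Imp (NN n (NN n (Imp A B))) (NN n B))"
    by (rule mp[OF ax1 hyp1]) (auto simp: n w wf_full wN w)
  have "deriv n {NN n B, A} (NN n (Imp A B))"
    by (rule mp[OF mp[OF ax3[of n B "NN n (Imp A B)"] 1] 2]) (auto simp: n w wf_full wN w)
  then have "deriv n {A} (Imp (NN n B) (NN n (Imp A B)))" using DT n w wN by simp
  then show ?thesis using DT[of n _ "{}"] n w wN lift by simp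
qed

lemma cases_ax: assumes n: "n \<ge> 1" and w: "wf n A" "wf n B"
  shows "deriv n \<Sigma> (Imp (Imp A B) (Imp (Imp (NN n A) B) B))"
proof -
  have wN: "wf n (NN n A)" "wf n (NN n B)" "wf n (NN n (NN n A))" using n w wfN by auto
  let ?G = "{Imp (NN n A) B, Imp A B}"
  have 1: "deriv n ?G (Imp (NN n B) (NN n A))"
    by (rule mp[OF contra hyp2]) (auto simp: n w wf_full)
  have 3: "deriv n (insert (NN n B) ?G) (NN n (NN n A))"
    by (rule mp[OF mp[OF contra hyp2] hyp1]) (auto simp: n w wf_full wN)
  have "deriv n (insert (NN n B) ?G) A"
    by (rule mp[OF dne 3]) (auto simp: n w wf_full)
  then have 2: "deriv n ?G (Imp (NN n B) A)" using DT n w wN by simp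
  have "deriv n ?G B" by (rule mp[OF mp[OF ax3[of n A B] 1] 2]) (auto simp: n w wf_full w)
  then have "deriv n {Imp A B} (Imp (Imp (NN n A) B) B)" using DT n w wN by simp
  then show ?thesis using DT[of n _ "{}"] n w wN lift by simp
qed

lemma wf_tr: "\<forall>f\<in>ats P. wf n f \<Longrightarrow> wf n (tr n P)" by (induct P) auto

lemma kalmar: "\<forall>f\<in>ats P. wf n f \<Longrightarrow> \<forall>f\<in>ats P. lit n v f \<in> \<Sigma> \<Longrightarrow> deriv n \<Sigma> (plit n v P)"
proof (induct P)
  case (At f)
  then show ?case by (auto simp: lit_def plit_def intro: deriv.Hyp)
next
  case (PN a)
  have IH: "deriv n \<Sigma> (plit n v a)" using PN by auto
  have wa: "wf n (tr n a)" using PN wf_tr by auto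
  show ?case
  proof (cases "ev v a")
    case True
    then show ?thesis using IH by (auto simp: plit_def intro!: mp[OF dni] wa)
  next
    case False
    then show ?thesis using IH by (auto simp: plit_def)
  qed
next
  case (PI a b)
  have IHa: "deriv n \<Sigma> (plit n v a)" using PI by auto
  have IHb: "deriv n \<Sigma> (plit n v b)" using PI by auto
  have wa: "wf n (tr n a)" using PI wf_tr by auto
  have wb: "wf n (tr n b)" using PI wf_tr by auto
  show ?case
  proof (cases "ev v b")
    case True
    then show ?thesis using IHb wa wb by (auto simp: plit_def intro!: mp[OF ax1])
  next
    case nb: False
    show ?thesis
    proof (cases "ev v a")
      case True
      then show ?thesis using nb IHa IHb wa wb
        by (auto simp: plit_def intro!: mp[OF mp[OF impneg]])
    next
      case False
      then show ?thesis using nb IHa IHb wa wb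
        by (auto simp: plit_def intro!: mp[OF efq])
    qed
  qed
qed

lemma elim: "finite S \<Longrightarrow> \<forall>f\<in>ats P. wf n f \<Longrightarrow> (\<forall>v. ev v P) \<Longrightarrow> S \<subseteq> ats P \<Longrightarrow>
   deriv n (lit n v ` (ats P - S)) (tr n P)"
proof (induct S arbitrary: v rule: finite_induct)
  case empty
  have "deriv n (lit n v ` (ats P - {})) (plit n v P)" by (rule kalmar) (use empty in auto)
  then show ?case using empty by (simp add: plit_def)
next
  case (insert x S)
  let ?G = "lit n v ` (ats P - insert x S)"
  have xa: "x \<in> ats P" and wx: "wf n x" using insert by auto
  have wG: "\<forall>\<psi>\<in>?G. wf n \<psi>" using insert by (auto simp: lit_def)
  have eq: "ats P - S = insert x (ats P - insert x S)" using insert xa by auto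
  have img: "\<And>b. lit n (v(x:=b)) ` (ats P - insert x S) = ?G"
    by (rule image_cong) (auto simp: lit_def)
  have "deriv n (lit n (v(x:=True)) ` (ats P - S)) (tr n P)" using insert by auto
  then have 1: "deriv n (insert x ?G) (tr n P)" unfolding eq image_insert img by (simp add: lit_def)
  have "deriv n (lit n (v(x:=False)) ` (ats P - S)) (tr n P)" using insert by auto
  then have 2: "deriv n (insert (NN n x) ?G) (tr n P)" unfolding eq image_insert img by (simp add: lit_def)
  have wP: "wf n (tr n P)" using insert wf_tr by auto
  have 1: "deriv n ?G (Imp x (tr n P))" by (rule DT[OF 1]) (use wG wx in auto)
  have 2: "deriv n ?G (Imp (NN n x) (tr n P))" by (rule DT[OF 2]) (use wG wx in auto)
  show ?case by (rule mp[OF mp[OF cases_ax 1] 2]) (use wx wP in auto)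
qed

lemma taut: "\<forall>f\<in>ats P. wf n f \<Longrightarrow> (\<forall>v. ev v P) \<Longrightarrow> deriv n \<Sigma> (tr n P)"
  using elim[OF finite_ats, of P P] lift by auto

lemma combine: "\<forall>f\<in>ats (foldr PI Hs G). wf n f \<Longrightarrow> (\<forall>v. ev v (foldr PI Hs G)) \<Longrightarrow>
   \<forall>H\<in>set Hs. deriv n {} (tr n H) \<Longrightarrow> deriv n {} (tr n G)"
  using taut fold_mp by blast

lemma F1: "chain n c \<Longrightarrow> c \<noteq> {} \<Longrightarrow> c \<noteq> full n \<Longrightarrow>
  deriv n {} (tr n (piff (PN (At (Falsum c))) (At (Falsum (full n - c)))))"
proof -
  assume c: "chain n c" "c \<noteq> {}" "c \<noteq> full n"
  have e: "cocat (full n) c = full n - c" "full n - c \<noteq> {}" using c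
    by (auto simp: cocat_def chain_def full_def)
  have "axiom n (iff n (Neg (full n) (Falsum c)) (bot (cocat (full n) c)))"
    by (rule axiom.A6) (use c in auto)
  then show ?thesis using e by (auto simp: tr_piff bot_def intro: deriv.Ax)
qed

lemma A4i: "chain n c \<Longrightarrow> c \<noteq> {} \<Longrightarrow> \<forall>f\<in>ats X. wf n f \<Longrightarrow>
   deriv n {} (tr n (PI X (PI (At (Falsum c)) (At (Neg c (tr n X))))))"
  by (auto intro!: deriv.Ax axiom.A4 wf_tr)

lemma A7i: "chain n c \<Longrightarrow> c \<noteq> {} \<Longrightarrow> r \<noteq> {} \<Longrightarrow> r \<subseteq> c \<Longrightarrow>
   deriv n {} (tr n (PI (At (Falsum c)) (At (Falsum r))))"
  by (auto intro!: deriv.Ax axiom.A7)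

lemma A6i: "chain n c \<Longrightarrow> c \<noteq> {} \<Longrightarrow> chain n r \<Longrightarrow> r \<noteq> {} \<Longrightarrow> cocat c r \<noteq> {} \<Longrightarrow>
   deriv n {} (tr n (piff (At (Neg c (Falsum r))) (At (Falsum (cocat c r)))))"
proof -
  assume a: "chain n c" "c \<noteq> {}" "chain n r" "r \<noteq> {}" "cocat c r \<noteq> {}"
  have "axiom n (iff n (Neg c (Falsum r)) (bot (cocat c r)))" by (rule axiom.A6) (use a in auto)
  then show ?thesis using a by (auto simp: tr_piff bot_def intro: deriv.Ax)
qed

lemma L1: assumes c: "chain n c" "c \<noteq> {}" and X: "\<forall>f\<in>ats X. wf n f"
  shows "deriv n {} (tr n (PI (At (Falsum c)) (piff (At (Neg c (tr n X))) X)))"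
proof -
  have wX: "wf n (tr n X)" using X wf_tr by auto
  have h1: "deriv n {} (tr n (PI X (PI (At (Falsum c)) (At (Neg c (tr n X))))))" by (rule A4i) (use c X in auto)
  have h2: "deriv n {} (tr n (PI (At (Neg c (tr n X))) (PI (At (Falsum c)) (At (Neg c (Neg c (tr n X)))))))"
    using A4i[of c "At (Neg c (tr n X))"] c wX by auto
  have "axiom n (iff n (Neg c (Neg c (tr n X))) (neg (cocat c c) (tr n X)))" by (rule axiom.A5) (use c wX in auto)
  then have h3: "deriv n {} (tr n (piff (At (Neg c (Neg c (tr n X)))) X))"
    by (auto simp: tr_piff neg_def cocat_def intro: deriv.Ax)
  show ?thesis
    by (rule combine[of "[PI X (PI (At (Falsum c)) (At (Neg c (tr n X)))),
        PI (At (Neg c (tr n X))) (PI (At (Falsum c)) (At (Neg c (Neg c (tr n X))))),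
        piff (At (Neg c (Neg c (tr n X)))) X]"])
      (use c X wX h1 h2 h3 in \<open>auto simp: ev_piff ats_piff\<close>)
qed

lemma L2: assumes c: "chain n c" "c \<noteq> {}" and X: "\<forall>f\<in>ats X. wf n f"
  shows "deriv n {} (tr n (PI (PN (At (Falsum c))) (piff (At (Neg c (tr n X))) (PN X))))"
proof (cases "c = full n")
  case True
  have "deriv n {} (tr n (PI (PN (At (Falsum c))) (piff (PN X) (PN X))))"
    by (rule taut) (use c X in \<open>auto simp: ev_piff ats_piff\<close>)
  then show ?thesis using True by (simp add: tr_piff)
next
  case False
  let ?c = "full n - c"
  have wX: "wf n (tr n X)" using X wf_tr by auto
  have e: "cocat (full n) c = ?c" "?c \<noteq> {}" "chain n ?c" using c False
    by (auto simp: cocat_def chain_def full_def)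
  have h1: "deriv n {} (tr n (piff (PN (At (Falsum c))) (At (Falsum ?c))))" by (rule F1) (use c False in auto)
  have h2: "deriv n {} (tr n (PI (At (Falsum ?c)) (piff (At (Neg ?c (tr n X))) X)))" by (rule L1) (use e X in auto)
  have "axiom n (iff n (Neg (full n) (Neg c (tr n X))) (neg (cocat (full n) c) (tr n X)))"
    by (rule axiom.A5) (use c wX in auto)
  then have h3: "deriv n {} (tr n (piff (PN (At (Neg c (tr n X)))) (At (Neg ?c (tr n X)))))"
    using e by (auto simp: tr_piff neg_def intro: deriv.Ax)
  show ?thesis
    by (rule combine[of "[piff (PN (At (Falsum c))) (At (Falsum ?c)),
        PI (At (Falsum ?c)) (piff (At (Neg ?c (tr n X))) X),
        piff (PN (At (Neg c (tr n X)))) (At (Neg ?c (tr n X)))]"])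
      (use c X wX e h1 h2 h3 in \<open>auto simp: ev_piff ats_piff\<close>)
qed

lemma D: assumes a: "chain n a" "a \<noteq> {}" and b: "chain n b" "b \<noteq> {}" and ab: "a \<inter> b = {}"
  shows "deriv n {} (tr n (PI (PN (At (Falsum a))) (At (Falsum b))))"
proof -
  have af: "a \<noteq> full n" using a b ab by (auto simp: chain_def full_def)
  have h1: "deriv n {} (tr n (piff (PN (At (Falsum a))) (At (Falsum (full n - a)))))"
    by (rule F1) (use a af in auto)
  have h2: "deriv n {} (tr n (PI (At (Falsum (full n - a))) (At (Falsum b))))"
    by (rule A7i) (use a b ab in \<open>auto simp: chain_def full_def\<close>)
  show ?thesis
    by (rule combine[of "[piff (PN (At (Falsum a))) (At (Falsum (full n - a))),
        PI (At (Falsum (full n - a))) (At (Falsum b))]"])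
      (use a b h1 h2 af ab in \<open>auto simp: ev_piff ats_piff chain_def full_def\<close>)
qed

lemma main: assumes K: "chain n K" "K \<noteq> {}" and S: "chain n S" "S \<noteq> {}"
    and w: "wf n \<phi>" "wf n \<psi>"
  shows "deriv n {} (Imp (neg K \<phi>) (Imp (neg S \<psi>) (neg (cocat S (K \<inter> S)) (Imp \<phi> \<psi>))))"
proof -
  define r where "r = K \<inter> S"
  define d where "d = cocat S r"
  have dd: "d = S - K" unfolding d_def r_def cocat_def by auto
  let ?I = "PI (At \<phi>) (At \<psi>)"
  have wI: "\<forall>f\<in>ats ?I. wf n f" using w by auto
  have k1: "deriv n {} (tr n (PI (At (Falsum K)) (piff (At (Neg K \<phi>)) (At \<phi>))))"
    using L1[of K "At \<phi>"] K w by simp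
  have k2: "deriv n {} (tr n (PI (PN (At (Falsum K))) (piff (At (Neg K \<phi>)) (PN (At \<phi>)))))"
    using L2[of K "At \<phi>"] K w by simp
  have s1: "deriv n {} (tr n (PI (At (Falsum S)) (piff (At (Neg S \<psi>)) (At \<psi>))))"
    using L1[of S "At \<psi>"] S w by simp
  have s2: "deriv n {} (tr n (PI (PN (At (Falsum S))) (piff (At (Neg S \<psi>)) (PN (At \<psi>)))))"
    using L2[of S "At \<psi>"] S w by simp
  have wa: "wf n (Falsum K)" "wf n (Falsum S)" "wf n (Neg K \<phi>)" "wf n (Neg S \<psi>)" using K S w by auto
  have "deriv n {} (Imp (Neg K \<phi>) (Imp (Neg S \<psi>) (neg d (Imp \<phi> \<psi>))))"
  proof (cases "r = {}")
    case True
    then have dS: "d = S" unfolding d_def cocat_def by auto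
    have i1: "deriv n {} (tr n (PI (At (Falsum S)) (piff (At (Neg S (Imp \<phi> \<psi>))) ?I)))"
      using L1[of S ?I] S w by simp
    have i2: "deriv n {} (tr n (PI (PN (At (Falsum S))) (piff (At (Neg S (Imp \<phi> \<psi>))) (PN ?I))))"
      using L2[of S ?I] S w by simp
    have dj: "deriv n {} (tr n (PI (PN (At (Falsum K))) (At (Falsum S))))"
      by (rule D) (use K S True r_def in auto)
    have "deriv n {} (tr n (PI (At (Neg K \<phi>)) (PI (At (Neg S \<psi>)) (At (Neg S (Imp \<phi> \<psi>))))))"
      by (rule combine[of "[PI (At (Falsum K)) (piff (At (Neg K \<phi>)) (At \<phi>)),
          PI (PN (At (Falsum K))) (piff (At (Neg K \<phi>)) (PN (At \<phi>))),
          PI (At (Falsum S)) (piff (At (Neg S \<psi>)) (At \<psi>)),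
          PI (PN (At (Falsum S))) (piff (At (Neg S \<psi>)) (PN (At \<psi>))),
          PI (At (Falsum S)) (piff (At (Neg S (Imp \<phi> \<psi>))) ?I),
          PI (PN (At (Falsum S))) (piff (At (Neg S (Imp \<phi> \<psi>))) (PN ?I)),
          PI (PN (At (Falsum K))) (At (Falsum S))]"])
        (use k1 k2 s1 s2 i1 i2 dj wa w S in \<open>auto simp: ev_piff ats_piff\<close>)
    then show ?thesis using dS S by (simp add: neg_def)
  next
    case rne: False
    show ?thesis
    proof (cases "d = {}")
      case True
      have a7: "deriv n {} (tr n (PI (At (Falsum K)) (At (Falsum S))))"
        by (rule A7i) (use K S True dd in auto)
      have "deriv n {} (tr n (PI (At (Neg K \<phi>)) (PI (At (Neg S \<psi>)) ?I)))"
        by (rule combine[of "[PI (At (Falsum K)) (piff (At (Neg K \<phi>)) (At \<phi>)),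
            PI (PN (At (Falsum K))) (piff (At (Neg K \<phi>)) (PN (At \<phi>))),
            PI (At (Falsum S)) (piff (At (Neg S \<psi>)) (At \<psi>)),
            PI (PN (At (Falsum S))) (piff (At (Neg S \<psi>)) (PN (At \<psi>))),
            PI (At (Falsum K)) (At (Falsum S))]"])
          (use k1 k2 s1 s2 a7 wa w in \<open>auto simp: ev_piff ats_piff\<close>)
      then show ?thesis using True by (simp add: neg_def)
    next
      case dne: False
      have rc: "chain n r" "chain n d" using K S unfolding r_def dd by (auto simp: chain_def)
      have i1: "deriv n {} (tr n (PI (At (Falsum d)) (piff (At (Neg d (Imp \<phi> \<psi>))) ?I)))"
        using L1[of d ?I] rc dne w by simp
      have i2: "deriv n {} (tr n (PI (PN (At (Falsum d))) (piff (At (Neg d (Imp \<phi> \<psi>))) (PN ?I))))"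
        using L2[of d ?I] rc dne w by simp
      have f1: "deriv n {} (tr n (PI (At (Falsum S)) (piff (At (Neg S (Falsum r))) (At (Falsum r)))))"
        using L1[of S "At (Falsum r)"] S rc rne by simp
      have f2: "deriv n {} (tr n (PI (PN (At (Falsum S))) (piff (At (Neg S (Falsum r))) (PN (At (Falsum r))))))"
        using L2[of S "At (Falsum r)"] S rc rne by simp
      have a7: "deriv n {} (tr n (PI (At (Falsum K)) (At (Falsum r))))"
        by (rule A7i) (use K rne r_def in auto)
      have a6: "deriv n {} (tr n (piff (At (Neg S (Falsum r))) (At (Falsum d))))"
        unfolding d_def by (rule A6i) (use S rc rne dne d_def in auto)
      have a7b: "deriv n {} (tr n (PI (At (Falsum S)) (At (Falsum d))))"
        by (rule A7i) (use S dne dd in auto)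
      have dj: "deriv n {} (tr n (PI (PN (At (Falsum K))) (At (Falsum d))))"
        by (rule D) (use K rc dne dd in auto)
      have wb: "wf n (Falsum r)" "wf n (Falsum d)" "wf n (Neg S (Falsum r))" "wf n (Neg d (Imp \<phi> \<psi>))"
        using rc rne dne S w by auto
      have "deriv n {} (tr n (PI (At (Neg K \<phi>)) (PI (At (Neg S \<psi>)) (At (Neg d (Imp \<phi> \<psi>))))))"
        by (rule combine[of "[PI (At (Falsum K)) (piff (At (Neg K \<phi>)) (At \<phi>)),
            PI (PN (At (Falsum K))) (piff (At (Neg K \<phi>)) (PN (At \<phi>))),
            PI (At (Falsum S)) (piff (At (Neg S \<psi>)) (At \<psi>)),
            PI (PN (At (Falsum S))) (piff (At (Neg S \<psi>)) (PN (At \<psi>))),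
            PI (At (Falsum d)) (piff (At (Neg d (Imp \<phi> \<psi>))) ?I),
            PI (PN (At (Falsum d))) (piff (At (Neg d (Imp \<phi> \<psi>))) (PN ?I)),
            PI (At (Falsum S)) (piff (At (Neg S (Falsum r))) (At (Falsum r))),
            PI (PN (At (Falsum S))) (piff (At (Neg S (Falsum r))) (PN (At (Falsum r)))),
            PI (At (Falsum K)) (At (Falsum r)),
            piff (At (Neg S (Falsum r))) (At (Falsum d)),
            PI (At (Falsum S)) (At (Falsum d)),
            PI (PN (At (Falsum K))) (At (Falsum d))]"])
          (use k1 k2 s1 s2 i1 i2 f1 f2 a7 a6 a7b dj wa wb w in \<open>auto simp: ev_piff ats_piff\<close>)
      then show ?thesis using dne by (simp add: neg_def)
    qed
  qed
  then show ?thesis using K S unfolding d_def r_def by (simp add: neg_def)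
qed

end

theorem mainTheorem7:
  fixes n :: nat and ck cs :: "nat set" and \<phi> \<psi> :: form
  assumes "n \<ge> 1"
    and "chain n ck" and "ck \<noteq> {}"
    and "chain n cs" and "cs \<noteq> {}"
    and "wf n \<phi>" and "wf n \<psi>"
  shows "deriv n {} (Imp (neg ck \<phi>)
           (Imp (neg cs \<psi>) (neg (cocat cs (ck \<inter> cs)) (Imp \<phi> \<psi>))))"
  using main[OF assms] .

end
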